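(* Let $(\alpha_k)_{k=0}^\infty$ be a strictly decreasing sequence of positive numbers, and let $g\in D(A^{\alpha_0})$ with $Q_ng\ne0$ for all $n$. (a) Set $\tilde\Gamma_{k,n}=\|Q_ng\|_{D(A^{\alpha_{k-1}})}$, $w_k=0$ and $\tilde w_{k,n}=-Q_ng/\tilde\Gamma_{k,n}$ for $k,n\ge1$. Then $P_ng\approx g+\sum_{k=1}^\infty\tilde\Gamma_{k,n}\cdot0$ is a degenerate expansion in the nested family $\mathcal Z=(D(A^{\alpha_k}))_{k=0}^\infty$ (with remainders $\tilde w_{k,n}$), and moreover $\|\tilde w_{k,n}\|_{D(A^{\alpha_{k-1}})}=1$ for all $k,n$. (b) Let $\beta=\inf_k\alpha_k$ and $s\in[0,\beta]$. Set $\Gamma_{k,n}=\|Q_ng\|_{D(A^{\alpha_k})}$ and $w_{k,n}=-Q_ng/\Gamma_{k,n}$. Then $P_ng\approx g+\sum_{k=1}^\infty\Gamma_{k,n}\cdot0$ is a degenerate expansion in $D(A^s)$ (with remainders $w_{k,n}$).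
   Context: $A$ is the Stokes operator (periodic or no-slip, three-dimensional) with eigenvalues $0<\lambda_1\le\lambda_2\le\cdots\to\infty$ and orthonormal eigenbasis $\{\varphi_j\}$ of the space $H$; $D(A^\alpha)=\{\sum c_j\varphi_j:\sum\lambda_j^{2\alpha}|c_j|^2<\infty\}$ with norm $\|u\|_{D(A^\alpha)}=(\sum\lambda_j^{2\alpha}|c_j|^2)^{1/2}$; $P_n$ is the orthogonal projection onto $\mathrm{span}\{\varphi_1,\ldots,\varphi_n\}$ and $Q_n=I-P_n$. Expansions: for nested normed spaces $Z_0\subset Z_1\subset\cdots$ with continuous embeddings, a degenerate expansion $v_n\approx v+\sum_{k=1}^\infty\Gamma_{k,n}w_k$ of a sequence $(v_n)\subset Z_0$ means: $v\in Z_0$, $w_k\in Z_k$, $w_{k,n}\in Z_{k-1}$, $\Gamma_{k,n}>0$ for all $n,k\ge1$ with $\Gamma_{1,n}\to0$, $\Gamma_{k+1,n}/\Gamma_{k,n}\to0$ and $\|w_{k,n}-w_k\|_{Z_k}\to0$ for each $k$, $v_n=v+\sum_{j=1}^{k-1}\Gamma_{j,n}w_j+\Gamma_{k,n}w_{k,n}$ for all $n,k$, and either $w_k=0$ for all $k$, or for some $N\ge1$, $\|w_k\|_{Z_k}=1$ for $k\le N$ and $w_k=0$ for $k>N$. "In a normed space $Z$" means $Z_k=Z$ for all $k$. *)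

theory Defs
  imports "HOL-Analysis.Analysis"
begin

text \<open>Abstract spectral setting of the Stokes operator: a real Hilbert space 'h with an
orthonormal basis phi (indexed from 0) of eigenvectors, with eigenvalues lam.\<close>

definition stokes_setting :: "(nat \<Rightarrow> real) \<Rightarrow> (nat \<Rightarrow> 'h::{real_inner,complete_space}) \<Rightarrow> bool" where
  "stokes_setting lam phi \<longleftrightarrow>
     0 < lam 0 \<and> incseq lam \<and> filterlim lam at_top sequentially \<and>
     (\<forall>i j. phi i \<bullet> phi j = (if i = j then 1 else 0)) \<and>
     (\<forall>u. (\<lambda>j. (u \<bullet> phi j) *\<^sub>R phi j) sums u)"

definition in_DA :: "(nat \<Rightarrow> real) \<Rightarrow> (nat \<Rightarrow> 'h::real_inner) \<Rightarrow> real \<Rightarrow> 'h \<Rightarrow> bool" where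
  "in_DA lam phi a u \<longleftrightarrow> summable (\<lambda>j. lam j powr (2 * a) * (u \<bullet> phi j)\<^sup>2)"

definition norm_DA :: "(nat \<Rightarrow> real) \<Rightarrow> (nat \<Rightarrow> 'h::real_inner) \<Rightarrow> real \<Rightarrow> 'h \<Rightarrow> real" where
  "norm_DA lam phi a u = sqrt (\<Sum>j. lam j powr (2 * a) * (u \<bullet> phi j)\<^sup>2)"

definition Pn :: "(nat \<Rightarrow> 'h::real_inner) \<Rightarrow> nat \<Rightarrow> 'h \<Rightarrow> 'h" where
  "Pn phi n u = (\<Sum>j<n. (u \<bullet> phi j) *\<^sub>R phi j)"

definition Qn :: "(nat \<Rightarrow> 'h::real_inner) \<Rightarrow> nat \<Rightarrow> 'h \<Rightarrow> 'h" where
  "Qn phi n u = u - Pn phi n u"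

text \<open>Degenerate expansion v_n \<approx> v + sum_k Gamma_{k,n} w_k in the nested family Z_k
(given by membership predicates Zmem k and norms Znorm k), with remainders wn k n.\<close>
definition degenerate_expansion ::
  "(nat \<Rightarrow> 'h::real_normed_vector \<Rightarrow> bool) \<Rightarrow> (nat \<Rightarrow> 'h \<Rightarrow> real) \<Rightarrow>
   (nat \<Rightarrow> 'h) \<Rightarrow> 'h \<Rightarrow> (nat \<Rightarrow> nat \<Rightarrow> real) \<Rightarrow> (nat \<Rightarrow> 'h) \<Rightarrow> (nat \<Rightarrow> nat \<Rightarrow> 'h) \<Rightarrow> bool" where
  "degenerate_expansion Zmem Znorm vn v \<Gamma> w wn \<longleftrightarrow>
     Zmem 0 v \<and>
     (\<forall>k\<ge>1. Zmem k (w k)) \<and>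
     (\<forall>k\<ge>1. \<forall>n\<ge>1. Zmem (k - 1) (wn k n)) \<and>
     (\<forall>k\<ge>1. \<forall>n\<ge>1. \<Gamma> k n > 0) \<and>
     ((\<lambda>n. \<Gamma> 1 n) \<longlonglongrightarrow> 0) \<and>
     (\<forall>k\<ge>1. (\<lambda>n. \<Gamma> (k + 1) n / \<Gamma> k n) \<longlonglongrightarrow> 0) \<and>
     (\<forall>k\<ge>1. (\<lambda>n. Znorm k (wn k n - w k)) \<longlonglongrightarrow> 0) \<and>
     (\<forall>k\<ge>1. \<forall>n\<ge>1. vn n = v + (\<Sum>j\<in>{1..<k}. \<Gamma> j n *\<^sub>R w j) + \<Gamma> k n *\<^sub>R wn k n) \<and>
     ((\<forall>k\<ge>1. w k = 0) \<or>
      (\<exists>N\<ge>1. (\<forall>k. 1 \<le> k \<and> k \<le> N \<longrightarrow> Znorm k (w k) = 1) \<and> (\<forall>k>N. w k = 0)))"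

end

theory Submission
  imports Defs
begin

definition FF :: "(nat \<Rightarrow> real) \<Rightarrow> (nat \<Rightarrow> 'h::real_inner) \<Rightarrow> 'h \<Rightarrow> real \<Rightarrow> nat \<Rightarrow> real" where
  "FF lam phi g a j = lam j powr (2*a) * (g \<bullet> phi j)\<^sup>2"

definition SS :: "(nat \<Rightarrow> real) \<Rightarrow> (nat \<Rightarrow> 'h::real_inner) \<Rightarrow> 'h \<Rightarrow> real \<Rightarrow> nat \<Rightarrow> real" where
  "SS lam phi g a n = (\<Sum>j. if j < n then 0 else FF lam phi g a j)"

lemma powr_cmp:
  fixes x y a b :: real
  assumes "b \<le> a" "0 < x" "x \<le> y"
  shows "y powr (2*b) \<le> x powr (2*b-2*a) * y powr (2*a)"
proof -
  have "y powr (2*b) = y powr (2*b-2*a) * y powr (2*a)"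
    by (simp add: powr_add[symmetric])
  also have "\<dots> \<le> x powr (2*b-2*a) * y powr (2*a)"
    by (rule mult_right_mono) (use assms powr_mono2'[of "2*b-2*a" x y] in auto)
  finally show ?thesis .
qed

context
  fixes lam :: "nat \<Rightarrow> real" and phi :: "nat \<Rightarrow> 'h::{real_inner,complete_space}"
    and a0 :: real and g :: 'h
  assumes setting: "stokes_setting lam phi"
    and g_dom: "in_DA lam phi a0 g"
    and Qg_nz0: "\<forall>n\<ge>1. Qn phi n g \<noteq> 0"
begin

lemma Qg_nz: "n \<ge> 1 \<Longrightarrow> Qn phi n g \<noteq> 0" using Qg_nz0 by blast


lemma lam_mono: "i \<le> j \<Longrightarrow> lam i \<le> lam j"
  using setting unfolding stokes_setting_def incseq_def by blast

lemma lam_pos: "0 < lam j"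
  using setting lam_mono[of 0 j] unfolding stokes_setting_def by auto

lemma ortho: "phi i \<bullet> phi j = (if i = j then 1 else 0)"
  using setting unfolding stokes_setting_def by blast

lemma coef_P: "Pn phi n u \<bullet> phi j = (if j < n then u \<bullet> phi j else 0)"
  unfolding Pn_def by (simp add: inner_sum_left ortho if_distrib cong: if_cong)

lemma coef_Q: "Qn phi n u \<bullet> phi j = (if j < n then 0 else u \<bullet> phi j)"
  unfolding Qn_def by (simp add: inner_diff_left coef_P)

lemma zero_if_coef: assumes "\<And>j. u \<bullet> phi j = 0" shows "u = 0"
proof -
  have "(\<lambda>j. (u \<bullet> phi j) *\<^sub>R phi j) sums u" using setting unfolding stokes_setting_def by blast
  then have "(\<lambda>j. 0::'h) sums u" using assms by simp
  then show ?thesis using sums_unique sums_zero by (metis sums_unique2)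
qed

lemma FF_nonneg: "0 \<le> FF lam phi g a j"
  unfolding FF_def by simp

lemma FF_cmp: "b \<le> a \<Longrightarrow> i \<le> j \<Longrightarrow> FF lam phi g b j \<le> lam i powr (2*b-2*a) * FF lam phi g a j"
  unfolding FF_def using powr_cmp[of b a "lam i" "lam j"] lam_pos lam_mono
  by (simp add: mult.assoc[symmetric] mult_right_mono)

lemma summ_FF: "a \<le> a0 \<Longrightarrow> summable (FF lam phi g a)"
proof -
  assume "a \<le> a0"
  have s0: "summable (FF lam phi g a0)" using g_dom unfolding in_DA_def FF_def .
  show ?thesis
    apply (rule summable_comparison_test[where g="\<lambda>j. lam 0 powr (2*a-2*a0) * FF lam phi g a0 j"])
    using FF_cmp[OF \<open>a \<le> a0\<close>, of 0] FF_nonneg summable_mult[OF s0] by auto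
qed

lemma summ_tail: "a \<le> a0 \<Longrightarrow> summable (\<lambda>j. if j < n then 0 else FF lam phi g a j)"
  apply (rule summable_comparison_test[where g="FF lam phi g a"])
  using FF_nonneg summ_FF by auto

lemma norm_Q_scaled: "a \<le> a0 \<Longrightarrow> norm_DA lam phi a (r *\<^sub>R Qn phi n g) = \<bar>r\<bar> * sqrt (SS lam phi g a n)"
proof -
  assume a: "a \<le> a0"
  have "(\<lambda>j. lam j powr (2 * a) * ((r *\<^sub>R Qn phi n g) \<bullet> phi j)\<^sup>2)
     = (\<lambda>j. r\<^sup>2 * (if j < n then 0 else FF lam phi g a j))"
    by (auto simp: fun_eq_iff coef_Q FF_def power_mult_distrib)
  then have "(\<Sum>j. lam j powr (2 * a) * ((r *\<^sub>R Qn phi n g) \<bullet> phi j)\<^sup>2) = r\<^sup>2 * SS lam phi g a n"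
    unfolding SS_def using suminf_mult[OF summ_tail[OF a]] by simp
  then show ?thesis unfolding norm_DA_def by (simp add: real_sqrt_mult)
qed

lemma norm_Q_div: "a \<le> a0 \<Longrightarrow> 0 \<le> N \<Longrightarrow> norm_DA lam phi a (- (1 / N) *\<^sub>R Qn phi n g) = sqrt (SS lam phi g a n) / N"
  using norm_Q_scaled[of a "- (1 / N)" n] by simp

lemma norm_Q: "a \<le> a0 \<Longrightarrow> norm_DA lam phi a (Qn phi n g) = sqrt (SS lam phi g a n)"
  using norm_Q_scaled[of a 1] by simp

lemma in_DA_Q_scaled: "a \<le> a0 \<Longrightarrow> in_DA lam phi a (r *\<^sub>R Qn phi n g)"
proof -
  assume a: "a \<le> a0"
  have "(\<lambda>j. lam j powr (2 * a) * ((r *\<^sub>R Qn phi n g) \<bullet> phi j)\<^sup>2)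
     = (\<lambda>j. r\<^sup>2 * (if j < n then 0 else FF lam phi g a j))"
    by (auto simp: fun_eq_iff coef_Q FF_def power_mult_distrib)
  then show ?thesis unfolding in_DA_def using summable_mult[OF summ_tail[OF a]] by simp
qed

lemma SS_pos: "a \<le> a0 \<Longrightarrow> n \<ge> 1 \<Longrightarrow> 0 < SS lam phi g a n"
proof -
  assume a: "a \<le> a0" and n: "n \<ge> 1"
  obtain j where j: "Qn phi n g \<bullet> phi j \<noteq> 0" using zero_if_coef Qg_nz[OF n] by blast
  then have jn: "\<not> j < n" and c: "g \<bullet> phi j \<noteq> 0" by (auto simp: coef_Q split: if_splits)
  have pj: "0 < FF lam phi g a j" unfolding FF_def using c lam_pos[of j] by simp
  show ?thesis unfolding SS_def
    apply (rule suminf_pos2[OF summ_tail[OF a], where i=j])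
    using jn pj FF_nonneg by auto
qed

lemma SS_nonneg: "a \<le> a0 \<Longrightarrow> 0 \<le> SS lam phi g a n"
  unfolding SS_def by (intro suminf_nonneg summ_tail) (auto simp: FF_nonneg)

lemma SS_lim: "a \<le> a0 \<Longrightarrow> SS lam phi g a \<longlonglongrightarrow> 0"
proof -
  assume a: "a \<le> a0"
  have eq: "SS lam phi g a n = suminf (FF lam phi g a) - (\<Sum>i<n. FF lam phi g a i)" for n
  proof -
    have "SS lam phi g a n = (\<Sum>j. (if j + n < n then 0 else FF lam phi g a (j + n))) + (\<Sum>i<n. if i < n then 0 else FF lam phi g a i)"
      unfolding SS_def using suminf_split_initial_segment[OF summ_tail[OF a], of n n] by simp
    also have "\<dots> = (\<Sum>j. FF lam phi g a (j + n))" by simp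
    finally show ?thesis using suminf_split_initial_segment[OF summ_FF[OF a], of n] by simp
  qed
  have "(\<lambda>n. suminf (FF lam phi g a) - (\<Sum>i<n. FF lam phi g a i)) \<longlonglongrightarrow> suminf (FF lam phi g a) - suminf (FF lam phi g a)"
    by (intro tendsto_intros summable_LIMSEQ summ_FF a)
  moreover have "SS lam phi g a = (\<lambda>n. suminf (FF lam phi g a) - (\<Sum>i<n. FF lam phi g a i))"
    by (rule ext) (rule eq)
  ultimately show ?thesis by simp
qed

lemma SS_cmp: "b \<le> a \<Longrightarrow> a \<le> a0 \<Longrightarrow> SS lam phi g b n \<le> lam n powr (2*b-2*a) * SS lam phi g a n"
proof -
  assume ba: "b \<le> a" and a: "a \<le> a0"
  have "SS lam phi g b n \<le> (\<Sum>j. lam n powr (2*b-2*a) * (if j < n then 0 else FF lam phi g a j))"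
    unfolding SS_def
    apply (rule suminf_le)
    using FF_cmp[OF ba, of n] summ_tail[OF order.trans[OF ba a]] summable_mult[OF summ_tail[OF a]]
    by auto
  then show ?thesis unfolding SS_def using suminf_mult[OF summ_tail[OF a]] by simp
qed

lemma ratio_lim: "b < a \<Longrightarrow> a \<le> a0 \<Longrightarrow> (\<lambda>n. sqrt (SS lam phi g b n) / sqrt (SS lam phi g a n)) \<longlonglongrightarrow> 0"
proof -
  assume ba: "b < a" and a: "a \<le> a0"
  have lim: "(\<lambda>n. lam n powr (b - a)) \<longlonglongrightarrow> 0"
    by (rule tendsto_neg_powr) (use ba setting in \<open>auto simp: stokes_setting_def\<close>)
  have bnd: "sqrt (SS lam phi g b n) / sqrt (SS lam phi g a n) \<le> lam n powr (b - a)" if n: "n \<ge> 1" for n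
  proof -
    have pos: "0 < sqrt (SS lam phi g a n)" using SS_pos[OF a n] by simp
    have "sqrt (SS lam phi g b n) \<le> sqrt (lam n powr (2*b-2*a) * SS lam phi g a n)"
      using SS_cmp[of b a n] ba a by simp
    also have "lam n powr (2*b-2*a) = lam n powr (b - a) * lam n powr (b - a)"
      by (simp add: powr_add[symmetric])
    also have "sqrt (lam n powr (b - a) * lam n powr (b - a) * SS lam phi g a n) = lam n powr (b - a) * sqrt (SS lam phi g a n)"
      by (simp add: real_sqrt_mult)
    finally show ?thesis using pos by (simp add: divide_le_eq)
  qed
  show ?thesis
  proof (rule tendsto_sandwich[OF _ _ tendsto_const lim])
    show "\<forall>\<^sub>F n in sequentially. 0 \<le> sqrt (SS lam phi g b n) / sqrt (SS lam phi g a n)"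
      using SS_nonneg[of b] SS_nonneg[of a] ba a by (intro always_eventually allI divide_nonneg_nonneg) auto
    show "\<forall>\<^sub>F n in sequentially. sqrt (SS lam phi g b n) / sqrt (SS lam phi g a n) \<le> lam n powr (b - a)"
      using bnd eventually_sequentially by blast
  qed
qed

end

theorem mainTheorem5:
  fixes lam :: "nat \<Rightarrow> real" and phi :: "nat \<Rightarrow> 'h::{real_inner,complete_space}"
    and \<alpha> :: "nat \<Rightarrow> real" and g :: 'h
  assumes setting: "stokes_setting lam phi"
    and alpha_pos: "\<And>k. \<alpha> k > 0"
    and alpha_dec: "\<And>k. \<alpha> (Suc k) < \<alpha> k"
    and g_dom: "in_DA lam phi (\<alpha> 0) g"
    and Qg_nz: "\<And>n. n \<ge> 1 \<Longrightarrow> Qn phi n g \<noteq> 0"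
  shows
    "degenerate_expansion (\<lambda>k. in_DA lam phi (\<alpha> k)) (\<lambda>k. norm_DA lam phi (\<alpha> k))
        (\<lambda>n. Pn phi n g) g
        (\<lambda>k n. norm_DA lam phi (\<alpha> (k - 1)) (Qn phi n g))
        (\<lambda>k. 0)
        (\<lambda>k n. - (1 / norm_DA lam phi (\<alpha> (k - 1)) (Qn phi n g)) *\<^sub>R Qn phi n g)
     \<and> (\<forall>k\<ge>1. \<forall>n\<ge>1. norm_DA lam phi (\<alpha> (k - 1))
            (- (1 / norm_DA lam phi (\<alpha> (k - 1)) (Qn phi n g)) *\<^sub>R Qn phi n g) = 1)
     \<and> (\<forall>s. 0 \<le> s \<and> s \<le> (INF k. \<alpha> k) \<longrightarrow>
          degenerate_expansion (\<lambda>k. in_DA lam phi s) (\<lambda>k. norm_DA lam phi s)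
            (\<lambda>n. Pn phi n g) g
            (\<lambda>k n. norm_DA lam phi (\<alpha> k) (Qn phi n g))
            (\<lambda>k. 0)
            (\<lambda>k n. - (1 / norm_DA lam phi (\<alpha> k) (Qn phi n g)) *\<^sub>R Qn phi n g))"
proof -
  have amono: "\<alpha> k \<le> \<alpha> 0" for k
  proof (induction k)
    case (Suc k) then show ?case using alpha_dec[of k] by simp
  qed simp
  have Qnz: "\<forall>n\<ge>1. Qn phi n g \<noteq> 0" using Qg_nz by blast
  note NS = norm_Q_scaled[OF setting g_dom Qnz]
  note ND = norm_Q_div[OF setting g_dom Qnz]
  note NQ = norm_Q[OF setting g_dom Qnz]
  note IQ = in_DA_Q_scaled[OF setting g_dom Qnz]
  note SP = SS_pos[OF setting g_dom Qnz]
  note SL = SS_lim[OF setting g_dom Qnz]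
  note RL = ratio_lim[OF setting g_dom Qnz]
  have in0: "in_DA lam phi a 0" for a unfolding in_DA_def by simp
  have veq: "Pn phi n g = g + (\<Sum>j\<in>{1..<k}. G j n *\<^sub>R (0::'h)) + N *\<^sub>R (- (1 / N) *\<^sub>R Qn phi n g)"
    if "N \<noteq> 0" for N :: real and G and k n
    using that by (simp add: Qn_def)
  have partA: "degenerate_expansion (\<lambda>k. in_DA lam phi (\<alpha> k)) (\<lambda>k. norm_DA lam phi (\<alpha> k))
        (\<lambda>n. Pn phi n g) g
        (\<lambda>k n. norm_DA lam phi (\<alpha> (k - 1)) (Qn phi n g))
        (\<lambda>k. 0)
        (\<lambda>k n. - (1 / norm_DA lam phi (\<alpha> (k - 1)) (Qn phi n g)) *\<^sub>R Qn phi n g)"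
    unfolding degenerate_expansion_def
  proof (intro conjI allI impI disjI1)
    show "in_DA lam phi (\<alpha> 0) g" by (rule g_dom)
    show "in_DA lam phi (\<alpha> k) 0" for k by (rule in0)
    show "in_DA lam phi (\<alpha> (k - 1)) (- (1 / norm_DA lam phi (\<alpha> (k - 1)) (Qn phi n g)) *\<^sub>R Qn phi n g)" for k n
      by (rule IQ[OF amono])
    show "0 < norm_DA lam phi (\<alpha> (k - 1)) (Qn phi n g)" if "n \<ge> 1" for k n
      using SP[OF amono that] NQ[OF amono] by simp
    show "(\<lambda>n. norm_DA lam phi (\<alpha> (1 - 1)) (Qn phi n g)) \<longlonglongrightarrow> 0"
      using tendsto_real_sqrt[OF SL[OF amono[of 0]]] by (simp add: NQ[OF amono])
    show "(\<lambda>n. norm_DA lam phi (\<alpha> (k + 1 - 1)) (Qn phi n g) / norm_DA lam phi (\<alpha> (k - 1)) (Qn phi n g)) \<longlonglongrightarrow> 0"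
      if k1: "k \<ge> 1" for k
    proof -
      obtain m where k: "k = Suc m" using k1 by (cases k) auto
      show ?thesis using RL[OF alpha_dec[of m] amono] by (simp add: k NQ[OF amono])
    qed
    show "(\<lambda>n. norm_DA lam phi (\<alpha> k) (- (1 / norm_DA lam phi (\<alpha> (k - 1)) (Qn phi n g)) *\<^sub>R Qn phi n g - 0)) \<longlonglongrightarrow> 0"
      if k1: "k \<ge> 1" for k
    proof -
      obtain m where k: "k = Suc m" using k1 by (cases k) auto
      show ?thesis using RL[OF alpha_dec[of m] amono]
        by (simp only: k NQ[OF amono] ND[OF amono real_sqrt_ge_zero[OF SS_nonneg[OF setting g_dom Qnz amono]]] diff_Suc_1 diff_zero)
    qed
    show "Pn phi n g = g + (\<Sum>j\<in>{1..<k}. norm_DA lam phi (\<alpha> (j - 1)) (Qn phi n g) *\<^sub>R 0) +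
          norm_DA lam phi (\<alpha> (k - 1)) (Qn phi n g) *\<^sub>R (- (1 / norm_DA lam phi (\<alpha> (k - 1)) (Qn phi n g)) *\<^sub>R Qn phi n g)"
      if "n \<ge> 1" for k n
      by (rule veq) (use SP[OF amono[of "k-1"] that] NQ[OF amono] in simp)
    show "(0::'h) = 0" for k :: nat by simp
  qed
  have partA2: "\<forall>k\<ge>1. \<forall>n\<ge>1. norm_DA lam phi (\<alpha> (k - 1))
            (- (1 / norm_DA lam phi (\<alpha> (k - 1)) (Qn phi n g)) *\<^sub>R Qn phi n g) = 1"
  proof (intro allI impI)
    fix k n :: nat assume n1: "n \<ge> 1"
    show "norm_DA lam phi (\<alpha> (k - 1)) (- (1 / norm_DA lam phi (\<alpha> (k - 1)) (Qn phi n g)) *\<^sub>R Qn phi n g) = 1"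
      using SP[OF amono[of "k-1"] n1]
      by (simp only: NQ[OF amono] ND[OF amono real_sqrt_ge_zero[OF SS_nonneg[OF setting g_dom Qnz amono]]]) simp
  qed
  have partB: "degenerate_expansion (\<lambda>k. in_DA lam phi s) (\<lambda>k. norm_DA lam phi s)
            (\<lambda>n. Pn phi n g) g
            (\<lambda>k n. norm_DA lam phi (\<alpha> k) (Qn phi n g))
            (\<lambda>k. 0)
            (\<lambda>k n. - (1 / norm_DA lam phi (\<alpha> k) (Qn phi n g)) *\<^sub>R Qn phi n g)"
    if s: "0 \<le> s" "s \<le> (INF k. \<alpha> k)" for s
  proof -
    have bdd: "bdd_below (range \<alpha>)" by (rule bdd_belowI2[of _ 0]) (use alpha_pos less_imp_le in blast)
    have sk: "s < \<alpha> k" for k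
      using s(2) cINF_lower[OF bdd, of "Suc k"] alpha_dec[of k] by simp
    have s0: "s \<le> \<alpha> 0" using sk[of 0] by simp
    show ?thesis
      unfolding degenerate_expansion_def
    proof (intro conjI allI impI disjI1)
      show "in_DA lam phi s g"
        using summ_FF[OF setting g_dom Qnz s0] unfolding in_DA_def FF_def by simp
      show "in_DA lam phi s 0" for k :: nat by (rule in0)
      show "in_DA lam phi s (- (1 / norm_DA lam phi (\<alpha> k) (Qn phi n g)) *\<^sub>R Qn phi n g)" for k n
        by (rule IQ[OF s0])
      show "0 < norm_DA lam phi (\<alpha> k) (Qn phi n g)" if "n \<ge> 1" for k n
        using SP[OF amono that] NQ[OF amono] by simp
      show "(\<lambda>n. norm_DA lam phi (\<alpha> 1) (Qn phi n g)) \<longlonglongrightarrow> 0"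
        using tendsto_real_sqrt[OF SL[OF amono[of 1]]] by (simp add: NQ[OF amono])
      show "(\<lambda>n. norm_DA lam phi (\<alpha> (k + 1)) (Qn phi n g) / norm_DA lam phi (\<alpha> k) (Qn phi n g)) \<longlonglongrightarrow> 0"
        for k
        using RL[OF alpha_dec[of k] amono] by (simp add: NQ[OF amono])
      show "(\<lambda>n. norm_DA lam phi s (- (1 / norm_DA lam phi (\<alpha> k) (Qn phi n g)) *\<^sub>R Qn phi n g - 0)) \<longlonglongrightarrow> 0"
        for k
        using RL[OF sk[of k] amono]
        by (simp only: NQ[OF amono] ND[OF s0 real_sqrt_ge_zero[OF SS_nonneg[OF setting g_dom Qnz amono]]] diff_zero)
      show "Pn phi n g = g + (\<Sum>j\<in>{1..<k}. norm_DA lam phi (\<alpha> j) (Qn phi n g) *\<^sub>R 0) +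
          norm_DA lam phi (\<alpha> k) (Qn phi n g) *\<^sub>R (- (1 / norm_DA lam phi (\<alpha> k) (Qn phi n g)) *\<^sub>R Qn phi n g)"
        if "n \<ge> 1" for k n
        by (rule veq) (use SP[OF amono[of k] that] NQ[OF amono] in simp)
      show "(0::'h) = 0" for k :: nat by simp
    qed
  qed
  show ?thesis using partA partA2 partB by blast
qed

end
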